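(* Let $\mathbb{F}\in\{\mathbb{R},\mathbb{C}\}$, let $\Phi=\{\varphi_i\}_{i=1}^M$ be a Parseval frame for $\mathbb{F}^N$, and let $1\le k\leq N$. Then $${N\choose k}\leq V_k(\Phi)\leq\sqrt{{M\choose k}{N\choose k}},$$ with equality in the upper bound if and only if $v_k(\Phi_K)=c_{M,N,k}$ for every $K\subseteq[M]$ with $|K|=k$, where $c_{M,N,k}=\sqrt{{M\choose k}^{-1}{N\choose k}}$; and with equality in the lower bound if and only if there is a subset $J\subseteq[M]$ with $|J|=N$ such that $\{\varphi_i\}_{i\in J}$ is an orthonormal basis of $\mathbb{F}^N$ and $\varphi_i=0$ whenever $i\notin J$.
   Context: A Parseval frame for $\mathbb{F}^N$ is a family $\{\varphi_i\}_{i=1}^M\subseteq\mathbb{F}^N$ whose $N\times M$ matrix $\Phi$ (columns $\varphi_i$) satisfies $\Phi\Phi^*=I$. For $K\subseteq[M]$, $\Phi_K$ denotes the $N\times|K|$ submatrix of columns indexed by $K$. For an $N\times k$ matrix $F$ with $k\le N$, $v_k(F)=\sqrt{\det(F^*F)}$. The total $k$-dimensional volume is $V_k(\Phi)=\sum_{|K|=k}v_k(\Phi_K)$. *)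

theory Defs
  imports Complex_Main "Jordan_Normal_Form.Schur_Decomposition" "Jordan_Normal_Form.DL_Submatrix"
begin

text \<open>Scalars: complex numbers; the field F is modelled as a subset of the complex numbers,
  either the reals or all of the complex numbers.  Indices of [M] are 0..<M.\<close>

definition in_field_vec :: "complex set \<Rightarrow> nat \<Rightarrow> complex vec \<Rightarrow> bool" where
  "in_field_vec F N v \<longleftrightarrow> v \<in> carrier_vec N \<and> (\<forall>l<N. v $ l \<in> F)"

definition parseval_frame :: "complex set \<Rightarrow> nat \<Rightarrow> nat \<Rightarrow> complex mat \<Rightarrow> bool" where
  "parseval_frame F N M Phi \<longleftrightarrow> Phi \<in> carrier_mat N M \<and>
     (\<forall>i<M. in_field_vec F N (col Phi i)) \<and> Phi * mat_adjoint Phi = 1\<^sub>m N"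

definition col_sub :: "complex mat \<Rightarrow> nat set \<Rightarrow> complex mat" where
  "col_sub Phi K = submatrix Phi {0..<dim_row Phi} K"

text \<open>v_k(F) = sqrt(det(F^* F)); det(F^* F) is a nonnegative real number, so we take the
  square root of its modulus (which equals det(F^* F) itself).\<close>
definition vol :: "complex mat \<Rightarrow> real" where
  "vol A = sqrt (cmod (det (mat_adjoint A * A)))"

definition total_vol :: "nat \<Rightarrow> nat \<Rightarrow> complex mat \<Rightarrow> real" where
  "total_vol M k Phi = (\<Sum>K\<in>{K. K \<subseteq> {0..<M} \<and> card K = k}. vol (col_sub Phi K))"

definition cinner :: "complex vec \<Rightarrow> complex vec \<Rightarrow> complex" where
  "cinner v w = (\<Sum>l<dim_vec v. v $ l * cnj (w $ l))"

definition is_onb :: "complex set \<Rightarrow> nat \<Rightarrow> complex mat \<Rightarrow> nat set \<Rightarrow> bool" where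
  "is_onb F N Phi J \<longleftrightarrow>
     (\<forall>i\<in>J. \<forall>j\<in>J. cinner (col Phi i) (col Phi j) = (if i = j then 1 else 0)) \<and>
     (\<forall>v. in_field_vec F N v \<longrightarrow>
        (\<exists>c. (\<forall>i\<in>J. c i \<in> F) \<and> v = finsum_vec TYPE(complex) N (\<lambda>i. c i \<cdot>\<^sub>v col Phi i) J))"

end

theory Submission
  imports Defs
begin

definition Fs :: "nat \<Rightarrow> nat \<Rightarrow> (nat \<Rightarrow> nat) set" where
  "Fs k n = {f. (\<forall>i\<in>{0..<k}. f i \<in> {0..<n}) \<and> (\<forall>i. i \<notin> {0..<k} \<longrightarrow> f i = i)}"

definition gram :: "nat \<Rightarrow> nat \<Rightarrow> (nat \<Rightarrow> nat \<Rightarrow> complex) \<Rightarrow> complex mat" where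
  "gram k n y = mat k k (\<lambda>(a,b). \<Sum>l\<in>{0..<n}. cnj (y l a) * y l b)"

definition rsub :: "nat \<Rightarrow> (nat \<Rightarrow> nat \<Rightarrow> complex) \<Rightarrow> (nat \<Rightarrow> nat) \<Rightarrow> complex mat" where
  "rsub k y f = mat k k (\<lambda>(a,b). y (f a) b)"

lemma finite_Fs: "finite (Fs k n)"
  unfolding Fs_def by (rule finite_bounded_functions) auto

lemma Fs_comp: assumes "f \<in> Fs k n" "p permutes {0..<k}" shows "f \<circ> p \<in> Fs k n"
  using assms permutes_in_image[OF assms(2)] permutes_not_in[OF assms(2)]
  unfolding Fs_def by auto

lemma rsub_comp: assumes "p permutes {0..<k}"
  shows "det (rsub k y (f \<circ> p)) = signof p * det (rsub k y f)"
proof -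
  have "rsub k y (f \<circ> p) = mat k k (\<lambda>(i,j). rsub k y f $$ (p i, j))"
  proof -
    have "\<And>i. i<k \<Longrightarrow> p i < k" using permutes_in_image[OF assms] by auto
    then show ?thesis by (intro eq_matI) (auto simp: rsub_def)
  qed
  then show ?thesis using det_permute_rows[OF _ assms, of "rsub k y f"]
    by (simp add: rsub_def)
qed

lemma sum_Fs_comp: assumes "p permutes {0..<k}"
  shows "(\<Sum>f\<in>Fs k n. G (f \<circ> p)) = (\<Sum>f\<in>Fs k n. G f)"
proof (rule sum.reindex_bij_witness[where i="\<lambda>f. f \<circ> Hilbert_Choice.inv p" and j="\<lambda>f. f \<circ> p"])
  have pi: "Hilbert_Choice.inv p permutes {0..<k}" using permutes_inv[OF assms] .
  fix f assume f: "f \<in> Fs k n"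
  show "f \<circ> p \<circ> Hilbert_Choice.inv p = f"
    by (simp add: comp_assoc permutes_inv_o(1)[OF assms])
  show "f \<circ> p \<in> Fs k n" by (rule Fs_comp[OF f assms])
  show "f \<circ> Hilbert_Choice.inv p \<circ> p = f"
    by (simp add: comp_assoc permutes_inv_o(2)[OF assms])
  show "f \<circ> Hilbert_Choice.inv p \<in> Fs k n" by (rule Fs_comp[OF f pi])
  show "G (f \<circ> p) = G (f \<circ> p)" ..
qed

lemma det_rsub_perm: "(\<Sum>p\<in>{p. p permutes {0..<k}}. signof p * (\<Prod>a\<in>{0..<k}. y (f (p a)) a))
   = det (rsub k y f)"
proof -
  have c: "rsub k y f \<in> carrier_mat k k" by (simp add: rsub_def)
  have "det (rsub k y f) = det (transpose_mat (rsub k y f))" using det_transpose[OF c] by simp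
  also have "\<dots> = (\<Sum>p\<in>{p. p permutes {0..<k}}. signof p * (\<Prod>a\<in>{0..<k}. y (f (p a)) a))"
    by (subst det_def'[of _ k]) (auto simp: rsub_def permutes_in_image intro!: sum.cong prod.cong)
  finally show ?thesis by simp
qed

lemma CBf: "of_nat (fact k) * det (gram k n y) =
   (\<Sum>f\<in>Fs k n. det (rsub k y f) * cnj (det (rsub k y f)))"
proof -
  let ?v = "\<lambda>a l. cnj (y l a) \<cdot>\<^sub>v vec k (\<lambda>b. y l b)"
  let ?P = "{p. p permutes {0..<k}}"
  define pf where "pf f = (\<Prod>a\<in>{0..<k}. y (f a) a)" for f
  have 1: "gram k n y = mat\<^sub>r k k (\<lambda>a. finsum_vec TYPE(complex) k (?v a) {0..<n})"
    by (rule eq_matI) (auto simp: gram_def index_finsum_vec intro!: sum.cong)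
  have 2: "det (gram k n y) = (\<Sum>f\<in>Fs k n. det (mat\<^sub>r k k (\<lambda>a. ?v a (f a))))"
    unfolding 1 Fs_def by (rule det_linear_rows_sum) auto
  have 3: "det (mat\<^sub>r k k (\<lambda>a. ?v a (f a))) = cnj (pf f) * det (rsub k y f)" for f
  proof -
    have "det (mat\<^sub>r k k (\<lambda>a. ?v a (f a))) = (\<Prod>a\<in>{0..<k}. cnj (y (f a) a)) * det (mat\<^sub>r k k (\<lambda>a. vec k (\<lambda>b. y (f a) b)))"
      by (rule det_rows_mul) auto
    moreover have "mat\<^sub>r k k (\<lambda>a. vec k (\<lambda>b. y (f a) b)) = rsub k y f"
      by (rule eq_matI) (auto simp: rsub_def)
    ultimately show ?thesis by (simp add: pf_def cnj_prod)
  qed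
  have 4: "det (gram k n y) = (\<Sum>f\<in>Fs k n. cnj (pf (f \<circ> p)) * (signof p * det (rsub k y f)))"
    if p: "p permutes {0..<k}" for p
  proof -
    have "det (gram k n y) = (\<Sum>f\<in>Fs k n. cnj (pf f) * det (rsub k y f))" using 2 3 by simp
    also have "\<dots> = (\<Sum>f\<in>Fs k n. cnj (pf (f \<circ> p)) * det (rsub k y (f \<circ> p)))"
      by (rule sum_Fs_comp[OF p, symmetric])
    also have "\<dots> = (\<Sum>f\<in>Fs k n. cnj (pf (f \<circ> p)) * (signof p * det (rsub k y f)))"
      using rsub_comp[OF p] by simp
    finally show ?thesis .
  qed
  have cardP: "card ?P = fact k" by (rule card_permutations) auto
  have "of_nat (fact k) * det (gram k n y) = (\<Sum>p\<in>?P. det (gram k n y))"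
    by (simp add: cardP)
  also have "\<dots> = (\<Sum>p\<in>?P. \<Sum>f\<in>Fs k n. cnj (pf (f \<circ> p)) * (signof p * det (rsub k y f)))"
    using 4 by (intro sum.cong) auto
  also have "\<dots> = (\<Sum>f\<in>Fs k n. \<Sum>p\<in>?P. cnj (pf (f \<circ> p)) * (signof p * det (rsub k y f)))"
    by (rule sum.swap)
  also have "\<dots> = (\<Sum>f\<in>Fs k n. det (rsub k y f) * cnj (\<Sum>p\<in>?P. signof p * pf (f \<circ> p)))"
    by (intro sum.cong refl) (simp add: cnj_sum sum_distrib_left mult_ac)
  also have "\<dots> = (\<Sum>f\<in>Fs k n. det (rsub k y f) * cnj (det (rsub k y f)))"
    using det_rsub_perm by (simp add: pf_def)
  finally show ?thesis .
qed

definition pe :: "nat \<Rightarrow> nat set \<Rightarrow> nat \<Rightarrow> nat" where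
  "pe k K i = (if i < k then pick K i else i)"

lemma pick_bij: assumes "finite K" "card K = k" shows "bij_betw (pick K) {0..<k} K"
proof -
  have inj: "inj_on (pick K) {0..<k}"
  proof (rule linorder_inj_onI)
    fix x y assume "x < y" "x \<in> {0..<k}" "y \<in> {0..<k}"
    then have "pick K x < pick K y" using pick_mono[of y K x] assms by auto
    then show "pick K x \<noteq> pick K y" by simp
  qed auto
  have sub: "pick K ` {0..<k} \<subseteq> K" using assms pick_in_set by auto
  have "card (pick K ` {0..<k}) = card K" using card_image[OF inj] assms by simp
  then have "pick K ` {0..<k} = K" using card_subset_eq[OF assms(1) sub] by simp
  then show ?thesis using inj unfolding bij_betw_def by simp
qed

lemma S2F:
  fixes h :: "(nat \<Rightarrow> nat) \<Rightarrow> 'a :: comm_semiring_1"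
  assumes inv: "\<And>g p. g \<in> Fs k M \<Longrightarrow> p permutes {0..<k} \<Longrightarrow> h (g \<circ> p) = h g"
    and zero: "\<And>g. g \<in> Fs k M \<Longrightarrow> \<not> inj_on g {0..<k} \<Longrightarrow> h g = 0"
  shows "sum h (Fs k M) = of_nat (fact k) * (\<Sum>K\<in>{K. K \<subseteq> {0..<M} \<and> card K = k}. h (pe k K))"
proof -
  define I where "I = {g \<in> Fs k M. inj_on g {0..<k}}"
  define S where "S = {K. K \<subseteq> {0..<M} \<and> card K = k}"
  define P where "P = {p. p permutes {0..<k}}"
  have finS: "finite S" unfolding S_def by (rule finite_subset[of _ "Pow {0..<M}"]) auto
  have "sum h (Fs k M) = sum h I"
  proof (rule sum.mono_neutral_right)
    show "finite (Fs k M)" by (rule finite_Fs)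
    show "I \<subseteq> Fs k M" unfolding I_def by auto
    show "\<forall>i\<in>Fs k M - I. h i = 0" using zero unfolding I_def by blast
  qed
  also have "\<dots> = (\<Sum>K\<in>S. sum h {g\<in>I. g ` {0..<k} = K})"
  proof (rule sum.group[symmetric])
    show "finite I" using finite_Fs unfolding I_def by auto
    show "finite S" by (rule finS)
    show "(\<lambda>g. g ` {0..<k}) ` I \<subseteq> S"
    proof
      fix K assume "K \<in> (\<lambda>g. g ` {0..<k}) ` I"
      then obtain g where g: "g \<in> Fs k M" "inj_on g {0..<k}" and K: "K = g ` {0..<k}" unfolding I_def by auto
      have "card K = k" unfolding K using card_image[OF g(2)] by simp
      moreover have "K \<subseteq> {0..<M}" unfolding K using g(1) unfolding Fs_def by auto
      ultimately show "K \<in> S" unfolding S_def by simp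
    qed
  qed
  also have "\<dots> = (\<Sum>K\<in>S. of_nat (fact k) * h (pe k K))"
  proof (rule sum.cong[OF refl])
    fix K assume K: "K \<in> S"
    have finK: "finite K" and cK: "card K = k" and KM: "K \<subseteq> {0..<M}" using K finite_subset unfolding S_def by auto
    have bij: "bij_betw (pick K) {0..<k} K" by (rule pick_bij[OF finK cK])
    have pkimg: "pick K ` {0..<k} = K" and pkinj: "inj_on (pick K) {0..<k}"
      using bij unfolding bij_betw_def by auto
    have peeq: "\<And>i. i \<in> {0..<k} \<Longrightarrow> pe k K i = pick K i" unfolding pe_def by simp
    have pe_img: "pe k K ` {0..<k} = K"
      using image_cong[OF refl peeq, of "{0..<k}"] pkimg by simp
    have pe_inj: "inj_on (pe k K) {0..<k}"
      using inj_on_cong[of "{0..<k}" "pe k K" "pick K"] peeq pkinj by simp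
    have peFs: "pe k K \<in> Fs k M"
    proof -
      have "pick K i < M" if "i < k" for i
      proof -
        have "pick K i \<in> K" using pkimg that by auto
        then show ?thesis using KM by auto
      qed
      then show ?thesis unfolding Fs_def pe_def by auto
    qed
    have eq: "{g\<in>I. g ` {0..<k} = K} = (\<lambda>p. pe k K \<circ> p) ` P"
    proof
      show "(\<lambda>p. pe k K \<circ> p) ` P \<subseteq> {g\<in>I. g ` {0..<k} = K}"
      proof
        fix g assume "g \<in> (\<lambda>p. pe k K \<circ> p) ` P"
        then obtain p where p: "p permutes {0..<k}" and g: "g = pe k K \<circ> p" unfolding P_def by auto
        have pimg: "p ` {0..<k} = {0..<k}" using permutes_image[OF p] .
        have "g \<in> Fs k M" unfolding g by (rule Fs_comp[OF peFs p])
        moreover have "inj_on g {0..<k}" unfolding g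
          using comp_inj_on[OF permutes_inj_on[OF p], of "pe k K" "{0..<k}"] pe_inj pimg by simp
        moreover have "g ` {0..<k} = K" unfolding g image_comp[symmetric] pimg pe_img ..
        ultimately show "g \<in> {g\<in>I. g ` {0..<k} = K}" unfolding I_def by auto
      qed
    next
      show "{g\<in>I. g ` {0..<k} = K} \<subseteq> (\<lambda>p. pe k K \<circ> p) ` P"
      proof
        fix g assume g: "g \<in> {g\<in>I. g ` {0..<k} = K}"
        then have gF: "g \<in> Fs k M" and gi: "inj_on g {0..<k}" and gK: "g ` {0..<k} = K"
          unfolding I_def by auto
        define p where "p i = (if i < k then inv_into {0..<k} (pick K) (g i) else i)" for i
        have pin: "p i < k" if i: "i < k" for i
        proof -
          have "g i \<in> pick K ` {0..<k}" using i gK bij unfolding bij_betw_def by auto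
          then have "inv_into {0..<k} (pick K) (g i) \<in> {0..<k}" by (rule inv_into_into)
          then show ?thesis unfolding p_def using i by simp
        qed
        have pinj: "inj_on p {0..<k}"
        proof (rule inj_onI)
          fix i j assume ij: "i \<in> {0..<k}" "j \<in> {0..<k}" "p i = p j"
          then have "inv_into {0..<k} (pick K) (g i) = inv_into {0..<k} (pick K) (g j)" unfolding p_def by auto
          moreover have "g i \<in> pick K ` {0..<k}" "g j \<in> pick K ` {0..<k}" using ij gK bij unfolding bij_betw_def by auto
          ultimately have "g i = g j" by (metis f_inv_into_f)
          then show "i = j" using gi ij inj_onD by metis
        qed
        have pp: "p permutes {0..<k}"
        proof (rule inj_on_nat_permutes[OF pinj])
          show "p \<in> {0..<k} \<rightarrow> {0..<k}" using pin by auto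
          show "\<And>i. i \<notin> {0..<k} \<Longrightarrow> p i = i" by (simp add: p_def)
        qed simp
        have "g = pe k K \<circ> p"
        proof
          fix i show "g i = (pe k K \<circ> p) i"
          proof (cases "i < k")
            case True
            then have "g i \<in> pick K ` {0..<k}" using gK bij unfolding bij_betw_def by auto
            then show ?thesis using True pin[OF True] by (simp add: pe_def p_def f_inv_into_f)
          next
            case False then show ?thesis using gF unfolding Fs_def pe_def p_def by auto
          qed
        qed
        then show "g \<in> (\<lambda>p. pe k K \<circ> p) ` P" using pp unfolding P_def by auto
      qed
    qed
    have injP: "inj_on (\<lambda>p. pe k K \<circ> p) P"
    proof (rule inj_onI)
      fix p q assume pq: "p \<in> P" "q \<in> P" "pe k K \<circ> p = pe k K \<circ> q"
      show "p = q"
      proof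
        fix i show "p i = q i"
        proof (cases "i < k")
          case True
          then have "p i \<in> {0..<k}" "q i \<in> {0..<k}" using pq permutes_in_image unfolding P_def by fastforce+
          moreover have "pe k K (p i) = pe k K (q i)" using pq(3) by (metis comp_apply)
          ultimately show ?thesis using pe_inj inj_onD by metis
        next
          case False
          then have "p i = i" "q i = i" using pq(1,2) permutes_not_in[of _ "{0..<k}" i] unfolding P_def by auto
          then show ?thesis by simp
        qed
      qed
    qed
    have cardP: "card P = fact k" unfolding P_def by (rule card_permutations) auto
    have "sum h {g\<in>I. g ` {0..<k} = K} = (\<Sum>p\<in>P. h (pe k K \<circ> p))"
      unfolding eq using sum.reindex[OF injP, of h] by (simp add: comp_def)
    also have "\<dots> = (\<Sum>p\<in>P. h (pe k K))"
      using inv[OF peFs] unfolding P_def by (intro sum.cong) auto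
    also have "\<dots> = of_nat (fact k) * h (pe k K)" by (simp add: cardP)
    finally show "sum h {g\<in>I. g ` {0..<k} = K} = of_nat (fact k) * h (pe k K)" .
  qed
  also have "\<dots> = of_nat (fact k) * (\<Sum>K\<in>S. h (pe k K))" by (simp add: sum_distrib_left)
  finally show ?thesis unfolding S_def .
qed

lemma adj_index: "i < dim_col A \<Longrightarrow> j < dim_row A \<Longrightarrow> mat_adjoint A $$ (i,j) = cnj (A $$ (j,i))"
  unfolding mat_adjoint_def by (simp add: mat_of_rows_index)

lemma adj_dim[simp]: "dim_row (mat_adjoint A) = dim_col A" "dim_col (mat_adjoint A) = dim_row A"
  unfolding mat_adjoint_def by auto

lemma pick_interval: "i < N \<Longrightarrow> pick {0..<N} i = i"
proof -
  assume i: "i < N"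
  have "card {a \<in> {0..<N}. a < i} = i"
  proof -
    have "{a \<in> {0..<N}. a < i} = {0..<i}" using i by auto
    then show ?thesis by simp
  qed
  then show ?thesis using pick_card_in_set[of i "{0..<N}"] i by simp
qed

lemma col_sub_eq: assumes "Phi \<in> carrier_mat N M" "K \<subseteq> {0..<M}" "card K = k"
  shows "col_sub Phi K = mat N k (\<lambda>(i,j). Phi $$ (i, pick K j))"
proof -
  have r: "{i. i < dim_row Phi \<and> i \<in> {0..<N}} = {0..<N}" using assms by auto
  have c: "{j. j < dim_col Phi \<and> j \<in> K} = K" using assms by auto
  show ?thesis unfolding col_sub_def submatrix_def r c using assms(1,3)
    by (intro eq_matI) (auto simp: pick_interval)
qed

lemma gram_col_sub: assumes "Phi \<in> carrier_mat N M" "K \<subseteq> {0..<M}" "card K = k"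
  shows "mat_adjoint (col_sub Phi K) * col_sub Phi K = gram k N (\<lambda>l b. Phi $$ (l, pick K b))"
  unfolding col_sub_eq[OF assms] gram_def
  by (rule eq_matI) (auto simp: scalar_prod_def adj_index intro!: sum.cong)

lemma det_cnj_transpose: assumes X: "X \<in> carrier_mat k k"
  shows "det (mat k k (\<lambda>(a,b). cnj (X $$ (b,a)))) = cnj (det X)"
proof -
  have "det (mat k k (\<lambda>(a,b). cnj (X $$ (b,a)))) = (\<Sum>p\<in>{p. p permutes {0..<k}}. signof p * (\<Prod>i\<in>{0..<k}. cnj (X $$ (p i, i))))"
    by (subst det_def'[of _ k]) (auto simp: permutes_in_image intro!: sum.cong prod.cong)
  also have "\<dots> = cnj (det (transpose_mat X))"
    by (subst det_def'[of _ k]) (use X in \<open>auto simp: cnj_sum cnj_prod permutes_in_image intro!: sum.cong prod.cong\<close>)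
  also have "\<dots> = cnj (det X)" using det_transpose[OF X] by simp
  finally show ?thesis .
qed

lemma cmod_signof: "cmod (signof p * z) = cmod z"
  by (cases rule: sign_cases[of p]) (auto simp: norm_mult)

lemma det_col_perm: assumes "p permutes {0..<k}"
  shows "det (mat k k (\<lambda>(a,b). X (a) (g (p b)))) = signof p * det (mat k k (\<lambda>(a,b). X a (g b)))"
proof -
  let ?A = "mat k k (\<lambda>(a,b). X a (g b))"
  have pk: "\<And>i. i<k \<Longrightarrow> p i < k" using permutes_in_image[OF assms] by auto
  have "det (mat k k (\<lambda>(a,b). X a (g (p b)))) = det (transpose_mat (mat k k (\<lambda>(a,b). X a (g (p b)))))"
    by (rule det_transpose[symmetric]) auto
  also have "transpose_mat (mat k k (\<lambda>(a,b). X a (g (p b)))) = mat k k (\<lambda>(i,j). transpose_mat ?A $$ (p i, j))"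
    by (rule eq_matI) (auto simp: pk)
  also have "det \<dots> = signof p * det (transpose_mat ?A)"
    by (rule det_permute_rows[OF _ assms]) auto
  also have "det (transpose_mat ?A) = det ?A" by (rule det_transpose) auto
  finally show ?thesis .
qed

lemma row_replace_zero:
  fixes A :: "complex mat"
  assumes A: "A \<in> carrier_mat k k" and dA: "det A \<noteq> 0" and r: "r \<in> carrier_vec k"
    and z: "\<And>a. a < k \<Longrightarrow> det (mat k k (\<lambda>(c,b). if c = a then r $ b else A $$ (c,b))) = 0"
  shows "r = 0\<^sub>v k"
proof -
  define B where "B = transpose_mat A"
  have B: "B \<in> carrier_mat k k" using A unfolding B_def by auto
  have dB: "det B = det A" unfolding B_def by (rule det_transpose[OF A])
  define x where "x = inverse (det B) \<cdot>\<^sub>v (adj_mat B *\<^sub>v r)"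
  have adjB: "adj_mat B \<in> carrier_mat k k" "B * adj_mat B = det B \<cdot>\<^sub>m 1\<^sub>m k" using adj_mat[OF B] by auto
  have x: "x \<in> carrier_vec k" unfolding x_def using adjB r by auto
  have "B *\<^sub>v x = inverse (det B) \<cdot>\<^sub>v (B *\<^sub>v (adj_mat B *\<^sub>v r))"
    unfolding x_def by (rule mult_mat_vec[OF B]) (use adjB r in auto)
  also have "B *\<^sub>v (adj_mat B *\<^sub>v r) = (B * adj_mat B) *\<^sub>v r"
    by (rule assoc_mult_mat_vec[symmetric, OF B adjB(1) r])
  also have "\<dots> = det B \<cdot>\<^sub>v r"
  proof -
    have h: "(\<Sum>ia=0..<k. det B * (r $ ia * (if ia = i then 1 else 0))) = det B * r $ i" if i: "i<k" for i
    proof -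
      have "(\<Sum>ia=0..<k. det B * (r $ ia * (if ia = i then 1 else 0))) = (\<Sum>ia=0..<k. if ia = i then det B * r$ia else 0)"
        by (intro sum.cong) auto
      also have "\<dots> = det B * r$i" using i by (simp add: sum.delta')
      finally show ?thesis .
    qed
    show ?thesis unfolding adjB(2) using r
      by (intro eq_vecI) (simp_all add: scalar_prod_def sum_distrib_left ac_simps h)
  qed
  finally have Bx: "B *\<^sub>v x = r" using dA dB r by (auto simp: smult_smult_assoc)
  have "x $ a = 0" if a: "a < k" for a
  proof -
    have "det (replace_col B (B *\<^sub>v x) a) = x $ a * det B" by (rule cramer_lemma_mat[OF B x a])
    moreover have "replace_col B (B *\<^sub>v x) a = transpose_mat (mat k k (\<lambda>(c,b). if c = a then r $ b else A $$ (c,b)))"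
      unfolding Bx unfolding B_def replace_col_def using A by (intro eq_matI) auto
    moreover have "det (transpose_mat (mat k k (\<lambda>(c,b). if c = a then r $ b else A $$ (c,b)))) = 0"
      using det_transpose[of "mat k k (\<lambda>(c,b). if c = a then r $ b else A $$ (c,b))" k] z[OF a] by auto
    ultimately show ?thesis using dA dB by simp
  qed
  then have "x = 0\<^sub>v k" using x by (intro eq_vecI) auto
  then show ?thesis using Bx B by auto
qed

definition Pm :: "complex mat \<Rightarrow> nat \<Rightarrow> nat \<Rightarrow> nat \<Rightarrow> complex" where
  "Pm Phi N x y = (\<Sum>l\<in>{0..<N}. cnj (Phi $$ (l,x)) * Phi $$ (l,y))"

definition Qm :: "complex mat \<Rightarrow> nat \<Rightarrow> nat \<Rightarrow> nat \<Rightarrow> complex" where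
  "Qm Phi N j x = (if j = x then 1 else 0) - Pm Phi N j x"

lemma deltaL: "finite A \<Longrightarrow> x \<in> A \<Longrightarrow> (\<Sum>j\<in>A. (if j = x then 1 else 0) * f j) = (f x :: complex)"
proof -
  assume A: "finite A" "x \<in> A"
  have "(\<Sum>j\<in>A. (if j = x then 1 else 0) * f j) = (\<Sum>j\<in>A. if j = x then f x else 0)" by (rule sum.cong) auto
  then show ?thesis using A by simp
qed

lemma deltaR: "finite A \<Longrightarrow> x \<in> A \<Longrightarrow> (\<Sum>j\<in>A. f j * (if j = x then 1 else 0)) = (f x :: complex)"
proof -
  assume A: "finite A" "x \<in> A"
  have "(\<Sum>j\<in>A. f j * (if j = x then 1 else 0)) = (\<Sum>j\<in>A. if j = x then f x else 0)" by (rule sum.cong) auto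
  then show ?thesis using A by simp
qed

lemma deltaR': "finite A \<Longrightarrow> x \<in> A \<Longrightarrow> (\<Sum>j\<in>A. f j * (if x = j then 1 else 0)) = (f x :: complex)"
proof -
  assume A: "finite A" "x \<in> A"
  have "(\<Sum>j\<in>A. f j * (if x = j then 1 else 0)) = (\<Sum>j\<in>A. if j = x then f x else 0)" by (rule sum.cong) auto
  then show ?thesis using A by simp
qed

context
  fixes Phi :: "complex mat" and N M :: nat
  assumes Pc: "Phi \<in> carrier_mat N M" and PP: "Phi * mat_adjoint Phi = 1\<^sub>m N"
begin

lemma B1: assumes "i < N" "i' < N"
  shows "(\<Sum>j\<in>{0..<M}. Phi $$ (i,j) * cnj (Phi $$ (i',j))) = (if i = i' then 1 else 0)"
proof -
  have "(Phi * mat_adjoint Phi) $$ (i,i') = (\<Sum>j\<in>{0..<M}. Phi $$ (i,j) * cnj (Phi $$ (i',j)))"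
    using assms Pc by (auto simp: scalar_prod_def adj_index intro!: sum.cong)
  then show ?thesis using PP assms by simp
qed

lemma P_cnj: "cnj (Pm Phi N x y) = Pm Phi N y x"
  unfolding Pm_def by (simp add: cnj_sum mult.commute)

lemma P_idem: assumes "x < M" "y < M"
  shows "(\<Sum>j\<in>{0..<M}. Pm Phi N x j * Pm Phi N j y) = Pm Phi N x y"
proof -
  have "(\<Sum>j\<in>{0..<M}. Pm Phi N x j * Pm Phi N j y) =
     (\<Sum>j\<in>{0..<M}. \<Sum>l\<in>{0..<N}. \<Sum>l'\<in>{0..<N}. (cnj (Phi $$ (l,x)) * Phi $$ (l',y)) * (Phi $$ (l,j) * cnj (Phi $$ (l',j))))"
    unfolding Pm_def by (intro sum.cong refl) (simp add: sum_product ac_simps)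
  also have "\<dots> = (\<Sum>l\<in>{0..<N}. \<Sum>j\<in>{0..<M}. \<Sum>l'\<in>{0..<N}. (cnj (Phi $$ (l,x)) * Phi $$ (l',y)) * (Phi $$ (l,j) * cnj (Phi $$ (l',j))))"
    by (rule sum.swap)
  also have "\<dots> = (\<Sum>l\<in>{0..<N}. \<Sum>l'\<in>{0..<N}. \<Sum>j\<in>{0..<M}. (cnj (Phi $$ (l,x)) * Phi $$ (l',y)) * (Phi $$ (l,j) * cnj (Phi $$ (l',j))))"
    by (rule sum.cong[OF refl]) (rule sum.swap)
  also have "\<dots> = (\<Sum>l\<in>{0..<N}. \<Sum>l'\<in>{0..<N}. (cnj (Phi $$ (l,x)) * Phi $$ (l',y)) * (if l = l' then 1 else 0))"
    by (intro sum.cong refl) (simp add: sum_distrib_left[symmetric] B1)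
  also have "\<dots> = (\<Sum>l\<in>{0..<N}. cnj (Phi $$ (l,x)) * Phi $$ (l,y))"
    by (intro sum.cong refl) (simp add: deltaR')
  finally show ?thesis unfolding Pm_def .
qed

lemma P_trace: "(\<Sum>x\<in>{0..<M}. Pm Phi N x x) = of_nat N"
proof -
  have "(\<Sum>x\<in>{0..<M}. Pm Phi N x x) = (\<Sum>l\<in>{0..<N}. \<Sum>x\<in>{0..<M}. Phi $$ (l,x) * cnj (Phi $$ (l,x)))"
    unfolding Pm_def by (subst sum.swap) (simp add: mult.commute)
  also have "\<dots> = (\<Sum>l\<in>{0..<N}. 1)" using B1 by (intro sum.cong) auto
  finally show ?thesis by simp
qed

lemma P_diag: "Pm Phi N x x = of_real (\<Sum>l\<in>{0..<N}. (cmod (Phi $$ (l,x)))^2)"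
  unfolding Pm_def of_real_sum by (intro sum.cong refl) (metis complex_norm_square mult.commute)

lemma QQ: assumes "x < M" "y < M"
  shows "Pm Phi N x y + (\<Sum>j\<in>{0..<M}. cnj (Qm Phi N j x) * Qm Phi N j y) = (if x = y then 1 else 0)"
proof -
  let ?P = "Pm Phi N"
  let ?d = "\<lambda>j x. (if j = x then 1 else 0) :: complex"
  have "(\<Sum>j\<in>{0..<M}. cnj (Qm Phi N j x) * Qm Phi N j y) =
     (\<Sum>j\<in>{0..<M}. ?d j x * ?d j y - ?d j x * ?P j y - ?P x j * ?d j y + ?P x j * ?P j y)"
    unfolding Qm_def by (intro sum.cong refl) (simp add: P_cnj algebra_simps)
  also have "\<dots> = (\<Sum>j\<in>{0..<M}. ?d j x * ?d j y) - (\<Sum>j\<in>{0..<M}. ?d j x * ?P j y)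
      - (\<Sum>j\<in>{0..<M}. ?P x j * ?d j y) + (\<Sum>j\<in>{0..<M}. ?P x j * ?P j y)"
    by (simp add: sum.distrib sum_subtractf)
  also have "(\<Sum>j\<in>{0..<M}. ?d j x * ?d j y) = ?d x y" using assms
    by (intro deltaL) auto
  also have "(\<Sum>j\<in>{0..<M}. ?d j x * ?P j y) = ?P x y" using assms
    by (intro deltaL) auto
  also have "(\<Sum>j\<in>{0..<M}. ?P x j * ?d j y) = ?P x y" using assms
    by (intro deltaR) auto
  also have "(\<Sum>j\<in>{0..<M}. ?P x j * ?P j y) = ?P x y" by (rule P_idem[OF assms])
  finally show ?thesis by (simp add: eq_commute[of x y])
qed

end

definition yK :: "complex mat \<Rightarrow> nat set \<Rightarrow> nat \<Rightarrow> nat \<Rightarrow> complex" where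
  "yK Phi K l b = Phi $$ (l, pick K b)"

definition cs :: "complex mat \<Rightarrow> nat \<Rightarrow> nat \<Rightarrow> nat set \<Rightarrow> real" where
  "cs Phi N k K = (\<Sum>f\<in>Fs k N. (cmod (det (rsub k (yK Phi K) f)))^2)"

lemma cs_nonneg: "0 \<le> cs Phi N k K" by (simp add: cs_def sum_nonneg)

lemma CBr: "of_nat (fact k) * det (gram k n y) = of_real (\<Sum>f\<in>Fs k n. (cmod (det (rsub k y f)))^2)"
  unfolding of_real_sum complex_norm_square by (rule CBf)

lemma sum_split_NM: fixes N M :: nat and f :: "nat \<Rightarrow> 'a::comm_monoid_add"
  shows "(\<Sum>l\<in>{0..<N+M}. f l) = (\<Sum>l\<in>{0..<N}. f l) + (\<Sum>j\<in>{0..<M}. f (N + j))"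
proof -
  have "(\<Sum>l\<in>{0..<N+M}. f l) = (\<Sum>l\<in>{0..<N}. f l) + (\<Sum>l\<in>{N..<N+M}. f l)"
    using sum.atLeastLessThan_concat[of 0 N "N+M" f] by simp
  also have "(\<Sum>l\<in>{N..<N+M}. f l) = (\<Sum>j\<in>{0..<M}. f (N + j))"
    using sum.shift_bounds_nat_ivl[of f 0 N M] by (simp add: add.commute)
  finally show ?thesis .
qed

context
  fixes Phi :: "complex mat" and N M :: nat
  assumes Pc: "Phi \<in> carrier_mat N M" and PP: "Phi * mat_adjoint Phi = 1\<^sub>m N"
begin

lemma pick_lt: assumes "K \<subseteq> {0..<M}" "card K = k" "b < k" shows "pick K b < M"
proof -
  have "finite K" using assms(1) finite_subset by auto
  then have "pick K b \<in> K" using pick_in_set[of b K] assms by auto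
  then show ?thesis using assms by auto
qed

lemma pick_eq_iff: assumes "K \<subseteq> {0..<M}" "card K = k" "a < k" "b < k"
  shows "pick K a = pick K b \<longleftrightarrow> a = b"
proof -
  have "finite K" using assms(1) finite_subset by auto
  then have "inj_on (pick K) {0..<k}" using pick_bij[of K k] assms unfolding bij_betw_def by auto
  then show ?thesis using assms inj_on_eq_iff[of "pick K" "{0..<k}" a b] by auto
qed

lemma det_gram_K: assumes "K \<subseteq> {0..<M}" "card K = k"
  shows "det (gram k N (yK Phi K)) = of_real (cs Phi N k K / fact k)"
proof -
  have "of_nat (fact k) * det (gram k N (yK Phi K)) = of_real (cs Phi N k K)"
    unfolding cs_def by (rule CBr)
  then show ?thesis by (simp add: field_simps)
qed

definition zK :: "nat set \<Rightarrow> nat \<Rightarrow> nat \<Rightarrow> complex" where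
  "zK K l b = (if l < N then Phi $$ (l, pick K b) else Qm Phi N (l - N) (pick K b))"

lemma Zgram: assumes K: "K \<subseteq> {0..<M}" "card K = k"
  shows "gram k (N+M) (zK K) = 1\<^sub>m k"
proof (rule eq_matI)
  fix a b assume ab: "a < dim_row (1\<^sub>m k)" "b < dim_col (1\<^sub>m k)"
  then have a: "a < k" and b: "b < k" by auto
  have pa: "pick K a < M" and pb: "pick K b < M" using pick_lt[OF K] a b by auto
  have "gram k (N+M) (zK K) $$ (a,b) = (\<Sum>l\<in>{0..<N+M}. cnj (zK K l a) * zK K l b)"
    unfolding gram_def using a b by simp
  also have "\<dots> = (\<Sum>l\<in>{0..<N}. cnj (zK K l a) * zK K l b) + (\<Sum>j\<in>{0..<M}. cnj (zK K (N+j) a) * zK K (N+j) b)"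
    by (rule sum_split_NM)
  also have "(\<Sum>l\<in>{0..<N}. cnj (zK K l a) * zK K l b) = Pm Phi N (pick K a) (pick K b)"
    unfolding Pm_def zK_def by (intro sum.cong) auto
  also have "(\<Sum>j\<in>{0..<M}. cnj (zK K (N+j) a) * zK K (N+j) b) = (\<Sum>j\<in>{0..<M}. cnj (Qm Phi N j (pick K a)) * Qm Phi N j (pick K b))"
    unfolding zK_def by (intro sum.cong) auto
  also have "Pm Phi N (pick K a) (pick K b) + \<dots> = (if pick K a = pick K b then 1 else 0)"
    by (rule QQ[OF Pc PP pa pb])
  also have "\<dots> = 1\<^sub>m k $$ (a,b)" using pick_eq_iff[OF K a b] a b by simp
  finally show "gram k (N+M) (zK K) $$ (a,b) = 1\<^sub>m k $$ (a,b)" .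
qed (auto simp: gram_def)

lemma Fs_mono: "N \<le> N' \<Longrightarrow> Fs k N \<subseteq> Fs k N'"
  unfolding Fs_def by auto

lemma rsub_z_eq: assumes "f \<in> Fs k N" shows "rsub k (zK K) f = rsub k (yK Phi K) f"
  using assms unfolding rsub_def Fs_def zK_def yK_def by (intro eq_matI) auto

lemma cs_rest: assumes K: "K \<subseteq> {0..<M}" "card K = k"
  shows "(\<Sum>f\<in>Fs k (N+M) - Fs k N. (cmod (det (rsub k (zK K) f)))^2) = fact k - cs Phi N k K"
proof -
  have cb: "of_nat (fact k) * det (gram k (N+M) (zK K)) = of_real (\<Sum>f\<in>Fs k (N+M). (cmod (det (rsub k (zK K) f)))^2)"
    by (rule CBr)
  then have tot: "(\<Sum>f\<in>Fs k (N+M). (cmod (det (rsub k (zK K) f)))^2) = fact k"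
  proof -
    let ?S = "(\<Sum>f\<in>Fs k (N+M). (cmod (det (rsub k (zK K) f)))^2)"
    have h: "complex_of_real ?S = of_nat (fact k)" using cb unfolding Zgram[OF K] by simp
    have "?S = Re (complex_of_real ?S)" by simp
    also have "\<dots> = Re (of_nat (fact k))" using h by simp
    also have "\<dots> = fact k" by simp
    finally show ?thesis .
  qed
  have sub: "Fs k N \<subseteq> Fs k (N+M)" by (rule Fs_mono) simp
  have "(\<Sum>f\<in>Fs k (N+M). (cmod (det (rsub k (zK K) f)))^2) =
     (\<Sum>f\<in>Fs k (N+M) - Fs k N. (cmod (det (rsub k (zK K) f)))^2) + (\<Sum>f\<in>Fs k N. (cmod (det (rsub k (zK K) f)))^2)"
    by (rule sum.subset_diff[OF sub finite_Fs])
  also have "(\<Sum>f\<in>Fs k N. (cmod (det (rsub k (zK K) f)))^2) = cs Phi N k K"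
    unfolding cs_def by (intro sum.cong) (auto simp: rsub_z_eq)
  finally show ?thesis using tot by simp
qed

lemma cs_le: assumes K: "K \<subseteq> {0..<M}" "card K = k"
  shows "cs Phi N k K \<le> fact k"
proof -
  have "0 \<le> (\<Sum>f\<in>Fs k (N+M) - Fs k N. (cmod (det (rsub k (zK K) f)))^2)" by (simp add: sum_nonneg)
  then show ?thesis using cs_rest[OF K] by simp
qed

lemma cs_one: assumes K: "K \<subseteq> {0..<M}" "card K = k" and eq: "cs Phi N k K = fact k" and b: "b < k"
  shows "Pm Phi N (pick K b) (pick K b) = 1"
proof -
  have rest0: "det (rsub k (zK K) f) = 0" if f: "f \<in> Fs k (N+M) - Fs k N" for f
  proof -
    have "(\<Sum>f\<in>Fs k (N+M) - Fs k N. (cmod (det (rsub k (zK K) f)))^2) = 0" using cs_rest[OF K] eq by simp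
    then have "\<forall>f\<in>Fs k (N+M) - Fs k N. (cmod (det (rsub k (zK K) f)))^2 = 0"
      by (subst sum_nonneg_eq_0_iff[symmetric]) (auto intro: finite_Diff finite_Fs)
    then show ?thesis using f by auto
  qed
  obtain f0 where f0: "f0 \<in> Fs k N" and d0: "det (rsub k (yK Phi K) f0) \<noteq> 0"
  proof -
    have "\<exists>f\<in>Fs k N. (cmod (det (rsub k (yK Phi K) f)))^2 \<noteq> 0"
    proof (rule ccontr)
      assume "\<not> ?thesis"
      then have "cs Phi N k K = 0" unfolding cs_def by (intro sum.neutral) auto
      with eq show False by simp
    qed
    then show ?thesis using that by auto
  qed
  have pb: "pick K b < M" using pick_lt[OF K b] .
  have Qz: "Qm Phi N j (pick K c) = 0" if j: "j < M" and c: "c < k" for j c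
  proof -
    define r where "r = vec k (\<lambda>c. Qm Phi N j (pick K c))"
    have "r = 0\<^sub>v k"
    proof (rule row_replace_zero[of "rsub k (yK Phi K) f0" k])
      show "rsub k (yK Phi K) f0 \<in> carrier_mat k k" by (simp add: rsub_def)
      show "det (rsub k (yK Phi K) f0) \<noteq> 0" by (rule d0)
      show "r \<in> carrier_vec k" by (simp add: r_def)
      fix a assume a: "a < k"
      define f where "f = f0(a := N + j)"
      have fF: "f \<in> Fs k (N+M) - Fs k N" using f0 a j unfolding f_def Fs_def by auto
      have "mat k k (\<lambda>(c, b). if c = a then r $ b else rsub k (yK Phi K) f0 $$ (c, b)) = rsub k (zK K) f"
        using f0 unfolding r_def rsub_def f_def zK_def yK_def Fs_def by (intro eq_matI) auto
      then show "det (mat k k (\<lambda>(c, b). if c = a then r $ b else rsub k (yK Phi K) f0 $$ (c, b))) = 0"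
        using rest0[OF fF] by simp
    qed
    then have "r $ c = 0" using c by simp
    then show ?thesis using c unfolding r_def by simp
  qed
  have "Qm Phi N (pick K b) (pick K b) = 0" by (rule Qz[OF pb b])
  then show ?thesis unfolding Qm_def by simp
qed

end

definition wm :: "complex mat \<Rightarrow> nat \<Rightarrow> (nat \<Rightarrow> nat) \<Rightarrow> (nat \<Rightarrow> nat) \<Rightarrow> complex mat" where
  "wm Phi k f g = mat k k (\<lambda>(a,b). Phi $$ (f a, g b))"

lemma wm_perm: assumes "p permutes {0..<k}"
  shows "(cmod (det (wm Phi k f (g \<circ> p))))^2 = (cmod (det (wm Phi k f g)))^2"
proof -
  have "det (wm Phi k f (g \<circ> p)) = signof p * det (wm Phi k f g)"
    unfolding wm_def using det_col_perm[OF assms, of "\<lambda>a c. Phi $$ (f a, c)" g] by simp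
  then show ?thesis by (simp add: cmod_signof)
qed

lemma wm_zero: assumes "\<not> inj_on g {0..<k}" shows "det (wm Phi k f g) = 0"
proof -
  obtain i j where ij: "i \<in> {0..<k}" "j \<in> {0..<k}" "g i = g j" "i \<noteq> j"
    using assms unfolding inj_on_def by auto
  show ?thesis
    by (rule det_identical_columns[of _ k i j]) (use ij in \<open>auto simp: wm_def intro!: eq_vecI\<close>)
qed

lemma ind_perm: assumes "p permutes {0..<k}"
  shows "inj_on (f \<circ> p) {0..<k} \<longleftrightarrow> inj_on f {0..<k}"
  using comp_inj_on_iff[OF permutes_inj_on[OF assms], of f "{0..<k}"] permutes_image[OF assms] by simp

lemma pe_inj: assumes "K \<subseteq> {0..<M}" "card K = k" shows "inj_on (pe k K) {0..<k}"
proof -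
  have "finite K" using assms(1) finite_subset by auto
  then have "inj_on (pick K) {0..<k}" using pick_bij[of K k] assms unfolding bij_betw_def by auto
  moreover have "\<And>i. i \<in> {0..<k} \<Longrightarrow> pe k K i = pick K i" unfolding pe_def by simp
  ultimately show ?thesis using inj_on_cong[of "{0..<k}" "pe k K" "pick K"] by simp
qed

lemma count_inj: "(\<Sum>f\<in>Fs k N. (if inj_on f {0..<k} then 1 else 0 :: real)) = fact k * (N choose k)"
proof -
  have "(\<Sum>f\<in>Fs k N. (if inj_on f {0..<k} then 1 else 0 :: real)) =
      of_nat (fact k) * (\<Sum>K\<in>{K. K \<subseteq> {0..<N} \<and> card K = k}. (if inj_on (pe k K) {0..<k} then 1 else 0))"
    by (rule S2F) (simp_all add: ind_perm)
  also have "(\<Sum>K\<in>{K. K \<subseteq> {0..<N} \<and> card K = k}. (if inj_on (pe k K) {0..<k} then 1 else 0 :: real)) =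
     (\<Sum>K\<in>{K. K \<subseteq> {0..<N} \<and> card K = k}. 1)"
    using pe_inj by (intro sum.cong) auto
  also have "\<dots> = of_nat (N choose k)" using n_subsets[of "{0..<N}" k] by simp
  finally show ?thesis by simp
qed

context
  fixes Phi :: "complex mat" and N M :: nat
  assumes Pc: "Phi \<in> carrier_mat N M" and PP: "Phi * mat_adjoint Phi = 1\<^sub>m N"
begin

lemma row_sum: assumes f: "f \<in> Fs k N"
  shows "(\<Sum>g\<in>Fs k M. (cmod (det (wm Phi k f g)))^2) = fact k * (if inj_on f {0..<k} then 1 else 0)"
proof -
  define y' where "y' l b = cnj (Phi $$ (f b, l))" for l b
  have fN: "\<And>a. a < k \<Longrightarrow> f a < N" using f unfolding Fs_def by auto
  have cb: "of_nat (fact k) * det (gram k M y') = of_real (\<Sum>g\<in>Fs k M. (cmod (det (rsub k y' g)))^2)"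
    by (rule CBr)
  have r: "(cmod (det (rsub k y' g)))^2 = (cmod (det (wm Phi k f g)))^2" for g
  proof -
    have "rsub k y' g = mat k k (\<lambda>(a,b). cnj (wm Phi k f g $$ (b,a)))"
      unfolding rsub_def wm_def y'_def by (intro eq_matI) auto
    then have "det (rsub k y' g) = cnj (det (wm Phi k f g))"
      using det_cnj_transpose[of "wm Phi k f g" k] by (simp add: wm_def)
    then show ?thesis by simp
  qed
  have gr: "gram k M y' = mat k k (\<lambda>(a,b). if f a = f b then 1 else 0)"
    unfolding gram_def y'_def using B1[OF Pc PP] fN by (intro eq_matI) auto
  have dg: "det (gram k M y') = (if inj_on f {0..<k} then 1 else 0)"
  proof (cases "inj_on f {0..<k}")
    case True
    then have "gram k M y' = 1\<^sub>m k" unfolding gr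
      by (intro eq_matI) (auto simp: inj_on_eq_iff)
    then show ?thesis using True by simp
  next
    case False
    then obtain i j where ij: "i \<in> {0..<k}" "j \<in> {0..<k}" "f i = f j" "i \<noteq> j"
      unfolding inj_on_def by auto
    have "det (gram k M y') = 0" unfolding gr
      by (rule det_identical_rows[of _ k i j]) (use ij in \<open>auto intro!: eq_vecI\<close>)
    then show ?thesis using False by simp
  qed
  let ?S = "(\<Sum>g\<in>Fs k M. (cmod (det (wm Phi k f g)))^2)"
  have h: "complex_of_real ?S = of_nat (fact k) * (if inj_on f {0..<k} then 1 else 0)"
    using cb unfolding dg r by simp
  have "?S = Re (complex_of_real ?S)" by simp
  also have "\<dots> = Re (of_nat (fact k) * (if inj_on f {0..<k} then 1 else 0))" using h by simp
  also have "\<dots> = fact k * (if inj_on f {0..<k} then 1 else 0)" by simp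
  finally show ?thesis .
qed

lemma sum_cs: "(\<Sum>K\<in>{K. K \<subseteq> {0..<M} \<and> card K = k}. cs Phi N k K) = fact k * (N choose k)"
proof -
  let ?S = "{K. K \<subseteq> {0..<M} \<and> card K = k}"
  let ?h = "\<lambda>f g. (cmod (det (wm Phi k f g)))^2"
  have e: "rsub k (yK Phi K) f = wm Phi k f (pe k K)" for K f
    unfolding rsub_def wm_def yK_def pe_def by (intro eq_matI) auto
  have "(\<Sum>K\<in>?S. cs Phi N k K) = (\<Sum>K\<in>?S. \<Sum>f\<in>Fs k N. ?h f (pe k K))"
    unfolding cs_def e ..
  also have "\<dots> = (\<Sum>f\<in>Fs k N. \<Sum>K\<in>?S. ?h f (pe k K))" by (rule sum.swap)
  finally have 1: "fact k * (\<Sum>K\<in>?S. cs Phi N k K) = (\<Sum>f\<in>Fs k N. fact k * (\<Sum>K\<in>?S. ?h f (pe k K)))"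
    by (simp add: sum_distrib_left)
  have 2: "fact k * (\<Sum>K\<in>?S. ?h f (pe k K)) = (\<Sum>g\<in>Fs k M. ?h f g)" for f
  proof -
    have "(\<Sum>g\<in>Fs k M. ?h f g) = of_nat (fact k) * (\<Sum>K\<in>?S. ?h f (pe k K))"
      by (rule S2F) (simp_all add: wm_perm wm_zero)
    then show ?thesis by simp
  qed
  have "fact k * (\<Sum>K\<in>?S. cs Phi N k K) = (\<Sum>f\<in>Fs k N. fact k * (if inj_on f {0..<k} then 1 else 0))"
    unfolding 1 2 using row_sum by (intro sum.cong) auto
  also have "\<dots> = fact k * (fact k * (N choose k))"
    by (simp add: sum_distrib_left[symmetric] count_inj)
  finally show ?thesis by simp
qed

end

lemma sqrt_ge_self: "0 \<le> (r::real) \<Longrightarrow> r \<le> 1 \<Longrightarrow> r \<le> sqrt r"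
proof -
  assume r: "0 \<le> r" "r \<le> 1"
  have s: "sqrt r \<le> 1" "0 \<le> sqrt r" using r by auto
  have "sqrt r * sqrt r \<le> sqrt r * 1" by (rule mult_left_mono[OF s(1) s(2)])
  then show ?thesis using r by simp
qed

lemma sqrt_eq_self: "0 \<le> (r::real) \<Longrightarrow> sqrt r = r \<Longrightarrow> r = 0 \<or> r = 1"
proof -
  assume r: "0 \<le> r" "sqrt r = r"
  then have "r * r = r" by (metis real_sqrt_mult_self abs_of_nonneg)
  then have "r * (r - 1) = 0" by (simp add: algebra_simps)
  then show ?thesis by simp
qed

lemma cs_ineq:
  fixes x :: "'a \<Rightarrow> real" and q :: real
  assumes S: "finite S" "S \<noteq> {}" and q: "(\<Sum>i\<in>S. (x i)^2) = q"
  shows "(\<Sum>i\<in>S. x i) \<le> sqrt (real (card S) * q)"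
    and "(\<Sum>i\<in>S. x i) = sqrt (real (card S) * q) \<longleftrightarrow> (\<forall>i\<in>S. x i = sqrt (q / real (card S)))"
proof -
  define n where "n = real (card S)"
  define s where "s = (\<Sum>i\<in>S. x i)"
  have n: "n > 0" using S unfolding n_def by (simp add: card_gt_0_iff)
  have q0: "q \<ge> 0" unfolding q[symmetric] by (intro sum_nonneg) simp
  define c where "c = s / n"
  have key: "(\<Sum>i\<in>S. (x i - c)^2) = q - s^2 / n"
  proof -
    have "(\<Sum>i\<in>S. (x i - c)^2) = (\<Sum>i\<in>S. (x i)^2 - 2 * c * x i + c^2)"
      by (rule sum.cong) (auto simp: power2_eq_square algebra_simps)
    also have "\<dots> = (\<Sum>i\<in>S. (x i)^2) - (\<Sum>i\<in>S. 2 * c * x i) + (\<Sum>i\<in>S. c^2)"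
      by (simp only: sum.distrib sum_subtractf)
    also have "(\<Sum>i\<in>S. 2 * c * x i) = 2 * c * s" unfolding s_def by (rule sum_distrib_left[symmetric])
    also have "(\<Sum>i\<in>S. c^2) = n * c^2" unfolding n_def by simp
    also have "(\<Sum>i\<in>S. (x i)^2) - 2 * c * s + n * c^2 = q - s^2 / n" unfolding c_def using n
      unfolding q by (simp add: power2_eq_square field_simps)
    finally show ?thesis .
  qed
  have le: "s^2 \<le> n * q"
  proof -
    have "0 \<le> (\<Sum>i\<in>S. (x i - c)^2)" by (intro sum_nonneg) simp
    then have "0 \<le> q - s^2 / n" unfolding key .
    then have "s^2 / n \<le> q" by simp
    then show ?thesis using n by (simp add: divide_le_eq mult.commute)
  qed
  have sq: "sqrt (n * q) = n * sqrt (q / n)"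
  proof -
    have "n * q = n^2 * (q / n)" using n by (simp add: power2_eq_square)
    then have "sqrt (n * q) = sqrt (n^2) * sqrt (q / n)" by (simp only: real_sqrt_mult)
    then show ?thesis using n by simp
  qed
  have "s \<le> sqrt (n * q)"
  proof -
    have "s \<le> \<bar>s\<bar>" by simp
    also have "\<bar>s\<bar> = sqrt (s^2)" by simp
    also have "\<dots> \<le> sqrt (n * q)" using le by (rule real_sqrt_le_mono)
    finally show ?thesis .
  qed
  then show "(\<Sum>i\<in>S. x i) \<le> sqrt (real (card S) * q)" unfolding s_def n_def .
  have "s = sqrt (n * q) \<longleftrightarrow> (\<forall>i\<in>S. x i = sqrt (q / n))"
  proof
    assume e: "s = sqrt (n * q)"
    then have "s^2 = n * q" using n q0 by simp
    then have "s^2 / n = q" using n by simp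
    then have "(\<Sum>i\<in>S. (x i - c)^2) = 0" unfolding key by simp
    then have "\<forall>i\<in>S. (x i - c)^2 = 0" using S by (subst sum_nonneg_eq_0_iff[symmetric]) auto
    moreover have "c = sqrt (q / n)" unfolding c_def e sq using n by simp
    ultimately show "\<forall>i\<in>S. x i = sqrt (q / n)" by simp
  next
    assume a: "\<forall>i\<in>S. x i = sqrt (q / n)"
    have "s = (\<Sum>i\<in>S. sqrt (q / n))" unfolding s_def using a by simp
    also have "\<dots> = n * sqrt (q / n)" unfolding n_def by simp
    finally show "s = sqrt (n * q)" using sq by simp
  qed
  then show "(\<Sum>i\<in>S. x i) = sqrt (real (card S) * q) \<longleftrightarrow> (\<forall>i\<in>S. x i = sqrt (q / real (card S)))"
    unfolding s_def n_def .
qed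


context
  fixes Phi :: "complex mat" and N M :: nat
  assumes Pc: "Phi \<in> carrier_mat N M" and PP: "Phi * mat_adjoint Phi = 1\<^sub>m N"
begin

definition rr :: "nat \<Rightarrow> nat set \<Rightarrow> real" where "rr k K = cs Phi N k K / fact k"

lemma rr_bounds: assumes "K \<subseteq> {0..<M}" "card K = k" shows "0 \<le> rr k K" "rr k K \<le> 1"
  using cs_nonneg[of Phi N k K] cs_le[OF Pc PP assms] unfolding rr_def by auto

lemma vol_eq: assumes K: "K \<subseteq> {0..<M}" "card K = k"
  shows "vol (col_sub Phi K) = sqrt (rr k K)"
proof -
  have "det (mat_adjoint (col_sub Phi K) * col_sub Phi K) = det (gram k N (yK Phi K))"
    unfolding gram_col_sub[OF Pc K] yK_def ..
  also have "\<dots> = of_real (rr k K)" unfolding rr_def by (rule det_gram_K[OF Pc PP K])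
  finally show ?thesis unfolding vol_def using rr_bounds[OF K] by simp
qed

lemma sum_rr: "(\<Sum>K\<in>{K. K \<subseteq> {0..<M} \<and> card K = k}. rr k K) = N choose k"
  unfolding rr_def using sum_cs[OF Pc PP, of k] by (simp add: sum_divide_distrib[symmetric])

lemma total_eq: "total_vol M k Phi = (\<Sum>K\<in>{K. K \<subseteq> {0..<M} \<and> card K = k}. sqrt (rr k K))"
  unfolding total_vol_def by (intro sum.cong refl) (auto simp: vol_eq)

end

context
  fixes Phi :: "complex mat" and N M :: nat
  assumes Pc: "Phi \<in> carrier_mat N M" and PP: "Phi * mat_adjoint Phi = 1\<^sub>m N"
begin

lemma Pm_orth: assumes i: "i < M" and j: "j < M" and ij: "i \<noteq> j" and one: "Pm Phi N i i = 1"
  shows "Pm Phi N i j = 0"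
proof -
  let ?c = "\<lambda>x. (cmod (Pm Phi N i x))^2"
  have "complex_of_real (\<Sum>x\<in>{0..<M}. ?c x) = (\<Sum>x\<in>{0..<M}. Pm Phi N i x * Pm Phi N x i)"
    unfolding of_real_sum by (intro sum.cong refl) (metis complex_norm_square P_cnj[OF Pc PP])
  also have "\<dots> = 1" using P_idem[OF Pc PP i i] one by simp
  finally have tot: "(\<Sum>x\<in>{0..<M}. ?c x) = 1"
    by (metis of_real_eq_1_iff)
  have "(\<Sum>x\<in>{0..<M}. ?c x) = ?c i + (\<Sum>x\<in>{0..<M} - {i}. ?c x)"
    using i by (subst sum.remove[of _ i]) auto
  then have "(\<Sum>x\<in>{0..<M} - {i}. ?c x) = 0" using tot one by simp
  then have "\<forall>x\<in>{0..<M} - {i}. ?c x = 0" by (subst sum_nonneg_eq_0_iff[symmetric]) auto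
  then show ?thesis using j ij by auto
qed

definition pd :: "nat \<Rightarrow> real" where "pd x = (\<Sum>l\<in>{0..<N}. (cmod (Phi $$ (l,x)))^2)"

lemma pd_Pm: "Pm Phi N x x = of_real (pd x)" unfolding pd_def by (rule P_diag[OF Pc PP])

lemma pd_nonneg: "0 \<le> pd x" unfolding pd_def by (intro sum_nonneg) simp

lemma pd_sum: "(\<Sum>x\<in>{0..<M}. pd x) = N"
proof -
  have "complex_of_real (\<Sum>x\<in>{0..<M}. pd x) = of_nat N"
    unfolding of_real_sum pd_Pm[symmetric] by (rule P_trace[OF Pc PP])
  then show ?thesis by (metis of_real_eq_iff of_real_of_nat_eq)
qed

lemma pd_zero: assumes "pd x = 0" "x < M" shows "col Phi x = 0\<^sub>v N"
proof -
  have "\<forall>l\<in>{0..<N}. (cmod (Phi $$ (l,x)))^2 = 0"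
    using assms(1) unfolding pd_def by (subst sum_nonneg_eq_0_iff[symmetric]) auto
  then show ?thesis using Pc assms(2) by (intro eq_vecI) auto
qed

lemma Pm_col_zero: assumes "col Phi x = 0\<^sub>v N" "x < M"
  shows "Pm Phi N x y = 0" "Pm Phi N y x = 0"
proof -
  have z: "\<And>l. l < N \<Longrightarrow> Phi $$ (l,x) = 0"
  proof -
    fix l assume l: "l < N"
    have "col Phi x $ l = 0" using assms(1) l by simp
    then show "Phi $$ (l,x) = 0" using Pc l assms(2) by simp
  qed
  show "Pm Phi N x y = 0" "Pm Phi N y x = 0" unfolding Pm_def using z by (auto intro!: sum.neutral)
qed

lemma cinner_Pm: assumes "x < M" "y < M" shows "cinner (col Phi x) (col Phi y) = Pm Phi N y x"
  unfolding cinner_def Pm_def using Pc assms by (intro sum.cong) (auto simp: mult.commute)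

lemma gram_Pm: "gram k N (yK Phi K) = mat k k (\<lambda>(a,b). Pm Phi N (pick K a) (pick K b))"
  unfolding gram_def yK_def Pm_def by (intro eq_matI) auto

end

lemma pick_surj: assumes "K \<subseteq> {0..<M}" "card K = k" "x \<in> K" shows "\<exists>a<k. pick K a = x"
proof -
  have "finite K" using assms(1) finite_subset by auto
  then have "pick K ` {0..<k} = K" using pick_bij[of K k] assms unfolding bij_betw_def by auto
  then show ?thesis using assms(3) by force
qed

context
  fixes Phi :: "complex mat" and N M :: nat
  assumes Pc: "Phi \<in> carrier_mat N M" and PP: "Phi * mat_adjoint Phi = 1\<^sub>m N"
begin

lemma lower_back:
  assumes J: "J \<subseteq> {0..<M}" and onb: "is_onb F N Phi J" and z: "\<forall>i\<in>{0..<M} - J. col Phi i = 0\<^sub>v N"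
    and K: "K \<subseteq> {0..<M}" "card K = k"
  shows "rr Phi N k K = (if K \<subseteq> J then 1 else 0)"
proof -
  have orth: "\<And>i j. i \<in> J \<Longrightarrow> j \<in> J \<Longrightarrow> cinner (col Phi i) (col Phi j) = (if i = j then 1 else 0)"
    using onb unfolding is_onb_def by blast
  have PmJ: "Pm Phi N x y = (if x = y \<and> x \<in> J then 1 else 0)" if x: "x < M" and y: "y < M" for x y
  proof (cases "x \<in> J")
    case xJ: True
    show ?thesis
    proof (cases "y \<in> J")
      case True
      then show ?thesis using cinner_Pm[OF Pc PP y x] orth[OF True xJ] xJ by auto
    next
      case False
      then have "Pm Phi N x y = 0" using Pm_col_zero(2)[OF Pc PP _ y, of x] z y by auto
      then show ?thesis using False xJ by auto
    qed
  next
    case False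
    then have "Pm Phi N x y = 0" using Pm_col_zero(1)[OF Pc PP _ x, of y] z x by auto
    then show ?thesis using False by auto
  qed
  let ?G = "gram k N (yK Phi K)"
  have dg: "det ?G = of_real (rr Phi N k K)"
    unfolding rr_def[OF Pc PP] by (rule det_gram_K[OF Pc PP K])
  have G: "?G = mat k k (\<lambda>(a,b). if a = b \<and> pick K a \<in> J then 1 else 0)"
    unfolding gram_Pm[OF Pc PP]
    using PmJ pick_lt[OF Pc PP K] pick_eq_iff[OF Pc PP K] by (intro eq_matI) auto
  show ?thesis
  proof (cases "K \<subseteq> J")
    case True
    have "\<And>a. a < k \<Longrightarrow> pick K a \<in> J"
    proof -
      fix a assume a: "a < k"
      have "finite K" using K finite_subset by auto
      then have "pick K a \<in> K" using pick_in_set[of a K] K a by auto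
      then show "pick K a \<in> J" using True by auto
    qed
    then have "?G = 1\<^sub>m k" unfolding G by (intro eq_matI) auto
    then have "complex_of_real (rr Phi N k K) = 1" using dg by simp
    then show ?thesis using True by (metis of_real_eq_1_iff)
  next
    case False
    then obtain x where x: "x \<in> K" "x \<notin> J" by auto
    obtain a where a: "a < k" "pick K a = x" using pick_surj[OF K x(1)] by auto
    have "?G = mat\<^sub>r k k (\<lambda>i. if i = a then 0\<^sub>v k else row ?G i)"
      unfolding G using a x by (intro eq_matI) auto
    also have "det \<dots> = 0" by (rule det_row_0[OF a(1)]) (auto simp: gram_def)
    finally have "complex_of_real (rr Phi N k K) = 0" using dg by simp
    then show ?thesis using False by simp
  qed
qed

end

lemma binom_strict: assumes "u < N" "1 \<le> k" "k \<le> N" shows "u choose k < N choose k"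
proof -
  obtain N' where N: "N = Suc N'" using assms by (cases N) auto
  obtain k' where k: "k = Suc k'" using assms by (cases k) auto
  have "u choose k \<le> N' choose k" using assms N by (intro binomial_right_mono) auto
  moreover have "0 < N' choose k'" using assms N k by simp
  moreover have "N choose k = (N' choose k') + (N' choose k)" unfolding N k by simp
  ultimately show ?thesis by linarith
qed

context
  fixes Phi :: "complex mat" and N M :: nat
  assumes Pc: "Phi \<in> carrier_mat N M" and PP: "Phi * mat_adjoint Phi = 1\<^sub>m N"
begin

lemma span_lemma:
  assumes U: "U \<subseteq> {0..<M}" and z: "\<forall>i\<in>{0..<M} - U. col Phi i = 0\<^sub>v N"
    and v: "v \<in> carrier_vec N"
  shows "v = finsum_vec TYPE(complex) N (\<lambda>i. (\<Sum>l\<in>{0..<N}. cnj (Phi $$ (l,i)) * v $ l) \<cdot>\<^sub>v col Phi i) U"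
proof -
  define c where "c i = (\<Sum>l\<in>{0..<N}. cnj (Phi $$ (l,i)) * v $ l)" for i
  have finU: "finite U" using U finite_subset by auto
  have cc: "(\<lambda>i. c i \<cdot>\<^sub>v col Phi i) \<in> U \<rightarrow> carrier_vec N" using Pc by auto
  show ?thesis unfolding c_def[symmetric]
  proof (rule eq_vecI)
    show "dim_vec v = dim_vec (finsum_vec TYPE(complex) N (\<lambda>i. c i \<cdot>\<^sub>v col Phi i) U)"
      using v finsum_vec_closed[OF cc] by simp
    fix l assume "l < dim_vec (finsum_vec TYPE(complex) N (\<lambda>i. c i \<cdot>\<^sub>v col Phi i) U)"
    then have l: "l < N" using finsum_vec_closed[OF cc] by simp
    have "finsum_vec TYPE(complex) N (\<lambda>i. c i \<cdot>\<^sub>v col Phi i) U $ l = (\<Sum>i\<in>U. c i * Phi $$ (l,i))"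
      using index_finsum_vec[OF finU l cc] Pc l U by (auto intro!: sum.cong)
    also have "\<dots> = (\<Sum>i\<in>{0..<M}. c i * Phi $$ (l,i))"
    proof (rule sum.mono_neutral_left)
      show "\<forall>i\<in>{0..<M} - U. c i * Phi $$ (l, i) = 0"
      proof
        fix i assume i: "i \<in> {0..<M} - U"
        then have "col Phi i $ l = 0" using z l by auto
        then show "c i * Phi $$ (l, i) = 0" using Pc l i by simp
      qed
    qed (use U in auto)
    also have "\<dots> = (\<Sum>i\<in>{0..<M}. \<Sum>l'\<in>{0..<N}. v $ l' * (Phi $$ (l,i) * cnj (Phi $$ (l',i))))"
      unfolding c_def by (intro sum.cong refl) (simp add: sum_distrib_left sum_distrib_right mult_ac)
    also have "\<dots> = (\<Sum>l'\<in>{0..<N}. \<Sum>i\<in>{0..<M}. v $ l' * (Phi $$ (l,i) * cnj (Phi $$ (l',i))))"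
      by (rule sum.swap)
    also have "\<dots> = (\<Sum>l'\<in>{0..<N}. v $ l' * (if l = l' then 1 else 0))"
      by (intro sum.cong refl) (simp add: sum_distrib_left[symmetric] B1[OF Pc PP l])
    also have "\<dots> = v $ l" using l by (simp add: deltaR')
    finally show "v $ l = finsum_vec TYPE(complex) N (\<lambda>i. c i \<cdot>\<^sub>v col Phi i) U $ l" by simp
  qed
qed

lemma lower_fwd:
  assumes F: "F = \<real> \<or> F = UNIV" and colF: "\<forall>i<M. in_field_vec F N (col Phi i)"
    and k: "1 \<le> k" "k \<le> N"
    and eq: "(\<Sum>K\<in>{K. K \<subseteq> {0..<M} \<and> card K = k}. sqrt (rr Phi N k K)) = N choose k"
  shows "\<exists>J. J \<subseteq> {0..<M} \<and> card J = N \<and> is_onb F N Phi J \<and> (\<forall>i\<in>{0..<M} - J. col Phi i = 0\<^sub>v N)"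
proof -
  define S where "S = {K. K \<subseteq> {0..<M} \<and> card K = k}"
  have finS: "finite S" unfolding S_def by (rule finite_subset[of _ "Pow {0..<M}"]) auto
  have sumr: "(\<Sum>K\<in>S. rr Phi N k K) = N choose k" unfolding S_def by (rule sum_rr[OF Pc PP])
  have bnd: "0 \<le> rr Phi N k K" "rr Phi N k K \<le> 1" if "K \<in> S" for K
    using rr_bounds[OF Pc PP, of K k] that unfolding S_def by auto
  have "(\<Sum>K\<in>S. sqrt (rr Phi N k K) - rr Phi N k K) = 0"
    using eq sumr unfolding S_def[symmetric] by (simp add: sum_subtractf)
  then have "\<forall>K\<in>S. sqrt (rr Phi N k K) - rr Phi N k K = 0"
    using finS bnd sqrt_ge_self by (subst sum_nonneg_eq_0_iff[symmetric]) auto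
  then have r01: "rr Phi N k K = 0 \<or> rr Phi N k K = 1" if "K \<in> S" for K
    using sqrt_eq_self[OF bnd(1)[OF that]] that by auto
  define T where "T = {K\<in>S. rr Phi N k K = 1}"
  have "(\<Sum>K\<in>S. rr Phi N k K) = (\<Sum>K\<in>T. rr Phi N k K)"
    by (rule sum.mono_neutral_right[OF finS]) (use r01 in \<open>auto simp: T_def\<close>)
  also have "\<dots> = card T" unfolding T_def by simp
  finally have cT: "card T = N choose k" using sumr by linarith
  define U where "U = {i\<in>{0..<M}. Pm Phi N i i = 1}"
  have finU: "finite U" unfolding U_def by auto
  have TU: "T \<subseteq> {K. K \<subseteq> U \<and> card K = k}"
  proof
    fix K assume KT: "K \<in> T"
    then have K: "K \<subseteq> {0..<M}" "card K = k" unfolding T_def S_def by auto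
    have "cs Phi N k K = fact k" using KT unfolding T_def rr_def[OF Pc PP] by simp
    then have "K \<subseteq> U" unfolding U_def using K pick_surj[OF K] cs_one[OF Pc PP K] by fastforce
    then show "K \<in> {K. K \<subseteq> U \<and> card K = k}" using K by auto
  qed
  have "card T \<le> card {K. K \<subseteq> U \<and> card K = k}"
    by (rule card_mono[OF _ TU]) (use finU in auto)
  then have "N choose k \<le> card U choose k" using cT n_subsets[OF finU, of k] by simp
  then have NU: "N \<le> card U" using binom_strict[of "card U" N k] k by (meson not_less leD)
  have U': "U = {i\<in>{0..<M}. pd Phi N i = 1}" unfolding U_def pd_Pm[OF Pc PP] by simp
  have "(\<Sum>x\<in>{0..<M}. pd Phi N x) = (\<Sum>x\<in>{0..<M} - U. pd Phi N x) + (\<Sum>x\<in>U. pd Phi N x)"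
    by (rule sum.subset_diff) (auto simp: U_def)
  also have "(\<Sum>x\<in>U. pd Phi N x) = card U" unfolding U' by simp
  finally have "(\<Sum>x\<in>{0..<M} - U. pd Phi N x) = real N - card U" using pd_sum[OF Pc PP] by simp
  moreover have "0 \<le> (\<Sum>x\<in>{0..<M} - U. pd Phi N x)" using pd_nonneg[OF Pc PP] by (simp add: sum_nonneg)
  ultimately have cU: "card U = N" and rest: "(\<Sum>x\<in>{0..<M} - U. pd Phi N x) = 0" using NU by auto
  have "\<forall>x\<in>{0..<M} - U. pd Phi N x = 0"
    using rest pd_nonneg[OF Pc PP] by (subst sum_nonneg_eq_0_iff[symmetric]) auto
  then have zc: "\<forall>i\<in>{0..<M} - U. col Phi i = 0\<^sub>v N" using pd_zero[OF Pc PP] by auto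
  have UM: "U \<subseteq> {0..<M}" unfolding U_def by auto
  have onb: "is_onb F N Phi U"
    unfolding is_onb_def
  proof (intro conjI ballI allI impI)
    fix i j assume i: "i \<in> U" and j: "j \<in> U"
    have iM: "i < M" and jM: "j < M" and jj: "Pm Phi N j j = 1" and ii: "Pm Phi N i i = 1"
      using i j unfolding U_def by auto
    show "cinner (col Phi i) (col Phi j) = (if i = j then 1 else 0)"
    proof (cases "i = j")
      case True then show ?thesis using cinner_Pm[OF Pc PP iM jM] ii by simp
    next
      case False then show ?thesis using cinner_Pm[OF Pc PP iM jM] Pm_orth[OF Pc PP jM iM _ jj] by simp
    qed
  next
    fix v assume v: "in_field_vec F N v"
    define c where "c i = (\<Sum>l\<in>{0..<N}. cnj (Phi $$ (l,i)) * v $ l)" for i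
    have vc: "v \<in> carrier_vec N" using v unfolding in_field_vec_def by auto
    have cF: "c i \<in> F" if i: "i \<in> U" for i
    proof (cases "F = UNIV")
      case True then show ?thesis by simp
    next
      case False
      then have FR: "F = \<real>" using F by auto
      have iM: "i < M" using i UM by auto
      have "Phi $$ (l,i) \<in> \<real>" if l: "l < N" for l
      proof -
        have "col Phi i $ l \<in> \<real>" using colF iM l FR unfolding in_field_vec_def by auto
        then show ?thesis using Pc iM l by simp
      qed
      moreover have "v $ l \<in> \<real>" if "l < N" for l using v that FR unfolding in_field_vec_def by auto
      ultimately show ?thesis unfolding c_def FR
        by (intro sum_in_Reals Reals_mult) (auto simp: Reals_cnj_iff)
    qed
    have "v = finsum_vec TYPE(complex) N (\<lambda>i. c i \<cdot>\<^sub>v col Phi i) U"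
      unfolding c_def by (rule span_lemma[OF UM zc vc])
    then show "\<exists>c. (\<forall>i\<in>U. c i \<in> F) \<and> v = finsum_vec TYPE(complex) N (\<lambda>i. c i \<cdot>\<^sub>v col Phi i) U"
      using cF by blast
  qed
  show ?thesis using UM cU onb zc by blast
qed

end

theorem proposition8:
  fixes F :: "complex set" and N M k :: nat and Phi :: "complex mat"
  assumes "F = \<real> \<or> F = UNIV"
    and "parseval_frame F N M Phi"
    and "1 \<le> k" and "k \<le> N"
  shows "real (N choose k) \<le> total_vol M k Phi
     \<and> total_vol M k Phi \<le> sqrt (real (M choose k) * real (N choose k))
     \<and> (total_vol M k Phi = sqrt (real (M choose k) * real (N choose k)) \<longleftrightarrow>
          (\<forall>K. K \<subseteq> {0..<M} \<and> card K = k \<longrightarrow>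
             vol (col_sub Phi K) = sqrt (real (N choose k) / real (M choose k))))
     \<and> (total_vol M k Phi = real (N choose k) \<longleftrightarrow>
          (\<exists>J. J \<subseteq> {0..<M} \<and> card J = N \<and> is_onb F N Phi J \<and>
               (\<forall>i\<in>{0..<M} - J. col Phi i = 0\<^sub>v N)))"
proof -
  have Pc: "Phi \<in> carrier_mat N M" and PP: "Phi * mat_adjoint Phi = 1\<^sub>m N"
    and colF: "\<forall>i<M. in_field_vec F N (col Phi i)"
    using assms(2) unfolding parseval_frame_def by auto
  define S where "S = {K. K \<subseteq> {0..<M} \<and> card K = k}"
  have finS: "finite S" unfolding S_def by (rule finite_subset[of _ "Pow {0..<M}"]) auto
  have cardS: "card S = M choose k" unfolding S_def using n_subsets[of "{0..<M}" k] by simp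
  have tv: "total_vol M k Phi = (\<Sum>K\<in>S. sqrt (rr Phi N k K))"
    unfolding S_def by (rule total_eq[OF Pc PP])
  have sumr: "(\<Sum>K\<in>S. rr Phi N k K) = N choose k" unfolding S_def by (rule sum_rr[OF Pc PP])
  have bnd: "0 \<le> rr Phi N k K" "rr Phi N k K \<le> 1" if "K \<in> S" for K
    using rr_bounds[OF Pc PP, of K k] that unfolding S_def by auto
  have sq: "(\<Sum>K\<in>S. (sqrt (rr Phi N k K))^2) = real (N choose k)"
    using sumr bnd by (simp add: real_sqrt_pow2)
  have Sne: "S \<noteq> {}"
  proof
    assume "S = {}"
    then have "real (N choose k) = 0" using sumr by simp
    then show False using assms(4) by simp
  qed
  note c1 = cs_ineq(1)[OF finS Sne sq] and c2 = cs_ineq(2)[OF finS Sne sq]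
  have P1: "real (N choose k) \<le> total_vol M k Phi"
    unfolding tv sumr[symmetric] by (rule sum_mono) (use bnd sqrt_ge_self in auto)
  have P2: "total_vol M k Phi \<le> sqrt (real (M choose k) * real (N choose k))"
    using c1 unfolding tv cardS .
  have P3: "total_vol M k Phi = sqrt (real (M choose k) * real (N choose k)) \<longleftrightarrow>
          (\<forall>K. K \<subseteq> {0..<M} \<and> card K = k \<longrightarrow>
             vol (col_sub Phi K) = sqrt (real (N choose k) / real (M choose k)))"
  proof -
    let ?c = "sqrt (real (N choose k) / real (M choose k))"
    have e: "(\<forall>K\<in>S. sqrt (rr Phi N k K) = ?c) \<longleftrightarrow> (\<forall>K. K \<subseteq> {0..<M} \<and> card K = k \<longrightarrow> vol (col_sub Phi K) = ?c)"
    proof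
      assume a: "\<forall>K\<in>S. sqrt (rr Phi N k K) = ?c"
      show "\<forall>K. K \<subseteq> {0..<M} \<and> card K = k \<longrightarrow> vol (col_sub Phi K) = ?c"
      proof (intro allI impI)
        fix K assume K: "K \<subseteq> {0..<M} \<and> card K = k"
        then have "K \<in> S" unfolding S_def by simp
        then show "vol (col_sub Phi K) = ?c" using a vol_eq[OF Pc PP, of K k] K by simp
      qed
    next
      assume a: "\<forall>K. K \<subseteq> {0..<M} \<and> card K = k \<longrightarrow> vol (col_sub Phi K) = ?c"
      show "\<forall>K\<in>S. sqrt (rr Phi N k K) = ?c"
      proof
        fix K assume "K \<in> S"
        then have K: "K \<subseteq> {0..<M}" "card K = k" unfolding S_def by auto
        then show "sqrt (rr Phi N k K) = ?c" using a vol_eq[OF Pc PP K] by simp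
      qed
    qed
    show ?thesis unfolding tv using c2 e unfolding cardS by simp
  qed
  have P4: "total_vol M k Phi = real (N choose k) \<longleftrightarrow>
          (\<exists>J. J \<subseteq> {0..<M} \<and> card J = N \<and> is_onb F N Phi J \<and>
               (\<forall>i\<in>{0..<M} - J. col Phi i = 0\<^sub>v N))"
  proof
    assume "total_vol M k Phi = real (N choose k)"
    then show "\<exists>J. J \<subseteq> {0..<M} \<and> card J = N \<and> is_onb F N Phi J \<and> (\<forall>i\<in>{0..<M} - J. col Phi i = 0\<^sub>v N)"
      using lower_fwd[OF Pc PP assms(1) colF assms(3,4)] unfolding tv S_def by simp
  next
    assume "\<exists>J. J \<subseteq> {0..<M} \<and> card J = N \<and> is_onb F N Phi J \<and> (\<forall>i\<in>{0..<M} - J. col Phi i = 0\<^sub>v N)"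
    then obtain J where J: "J \<subseteq> {0..<M}" "card J = N" "is_onb F N Phi J" "\<forall>i\<in>{0..<M} - J. col Phi i = 0\<^sub>v N"
      by blast
    have finJ: "finite J" using J(1) finite_subset by auto
    have "total_vol M k Phi = (\<Sum>K\<in>S. if K \<subseteq> J then 1 else 0)"
      unfolding tv using lower_back[OF Pc PP J(1) J(3) J(4)] unfolding S_def
      by (intro sum.cong refl) auto
    also have "\<dots> = (\<Sum>K\<in>{K\<in>S. K \<subseteq> J}. 1)" by (rule sum.inter_filter[OF finS, symmetric])
    also have "{K\<in>S. K \<subseteq> J} = {K. K \<subseteq> J \<and> card K = k}" unfolding S_def using J(1) by auto
    also have "(\<Sum>K\<in>{K. K \<subseteq> J \<and> card K = k}. 1) = real (N choose k)"
      using n_subsets[OF finJ, of k] J(2) by simp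
    finally show "total_vol M k Phi = real (N choose k)" .
  qed
  show ?thesis using P1 P2 P3 P4 by blast
qed

end
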